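(* Suppose $J$ satisfies (J) and there are $\beta\in(N,N+1]$ and $c_1,c_2,R>0$ with $c_1\eta^{-\beta}\le J(\eta)\le c_2\eta^{-\beta}$ for $\eta\ge R$. Then there are positive constants $C_1,C_2,H$ such that for all $h\ge H$, both $I_*(h):=\int_0^h\int_h^\infty J_*(r-\rho)d\rho dr$ and $\tilde I(h):=\int_0^h\int_h^\infty\tilde J(r,\rho)d\rho dr$ lie in $[C_1 g(h),C_2 g(h)]$, where $g(h)=h^{N+1-\beta}$ if $\beta\in(N,N+1)$ and $g(h)=\ln h$ if $\beta=N+1$.
   Context: $N\ge2$, $B_\rho=\{|x|<\rho\}\subset\mathbb R^N$. (J): $J\in C(\mathbb R_+)\cap L^\infty(\mathbb R_+)$, $J\ge0$, $J(0)>0$, $\int_{\mathbb R^N}J(|x|)dx=1$. $\tilde J(r,\rho)=\int_{\partial B_\rho}J(|x-y|)dS_y$ for $|x|=r$. $J_*(l)=\int_{\mathbb R^{N-1}}J(|(l,x')|)dx'$, $l\in\mathbb R$. *)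

theory Defs
  imports "HOL-Analysis.Analysis"
begin

text \<open>The ambient space R^N is modelled as the Euclidean space
  real \<times> (real^'m), so N = CARD('m) + 1 \<ge> 2 and R^(N-1) = real^'m; a point (l, x')
  of R^N is literally a pair. All quantities of interest are nonnegative, so they
  are taken as nonnegative (ennreal-valued) Lebesgue integrals.\<close>

definition dimN :: "'m::finite itself \<Rightarrow> nat" where
  "dimN _ = CARD('m) + 1"

text \<open>Surface integral over the sphere of radius rho centred at 0 in R^N, via the
  standard cone-measure description of the surface measure on the unit sphere:
  the integral over the unit sphere of f equals N times the integral over the unit
  ball of f(z/|z|); the sphere of radius rho carries rho^(N-1) times this.\<close>
definition sphere_int :: "'m::finite itself \<Rightarrow> real \<Rightarrow> (real \<times> (real^'m) \<Rightarrow> ennreal) \<Rightarrow> ennreal" where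
  "sphere_int t \<rho> f = ennreal (\<rho> ^ (dimN t - 1) * real (dimN t)) *
     (\<integral>\<^sup>+ z. indicator (ball 0 1) z * f (\<rho> *\<^sub>R (z /\<^sub>R norm z)) \<partial>lborel)"

definition Jstar :: "'m::finite itself \<Rightarrow> (real \<Rightarrow> real) \<Rightarrow> real \<Rightarrow> ennreal" where
  "Jstar t J l = (\<integral>\<^sup>+ x'. ennreal (J (norm (l, x' :: real^'m))) \<partial>lborel)"

text \<open>tilde J(r,rho) = integral over the sphere of radius rho of J(|x-y|) dS_y, for a
  point x with |x| = r (we take x = (r,0); the value does not depend on the choice
  by rotation invariance).\<close>
definition Jtilde :: "'m::finite itself \<Rightarrow> (real \<Rightarrow> real) \<Rightarrow> real \<Rightarrow> real \<Rightarrow> ennreal" where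
  "Jtilde t J r \<rho> = sphere_int t \<rho> (\<lambda>y. ennreal (J (norm ((r, 0 :: real^'m) - y))))"

definition Istar :: "'m::finite itself \<Rightarrow> (real \<Rightarrow> real) \<Rightarrow> real \<Rightarrow> ennreal" where
  "Istar t J h = (\<integral>\<^sup>+ r. indicator {0..h} r *
      (\<integral>\<^sup>+ \<rho>. indicator {h..} \<rho> * Jstar t J (r - \<rho>) \<partial>lborel) \<partial>lborel)"

definition Itilde :: "'m::finite itself \<Rightarrow> (real \<Rightarrow> real) \<Rightarrow> real \<Rightarrow> ennreal" where
  "Itilde t J h = (\<integral>\<^sup>+ r. indicator {0..h} r *
      (\<integral>\<^sup>+ \<rho>. indicator {h..} \<rho> * Jtilde t J r \<rho> \<partial>lborel) \<partial>lborel)"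

definition gfun :: "nat \<Rightarrow> real \<Rightarrow> real \<Rightarrow> real" where
  "gfun N \<beta> h = (if \<beta> = real N + 1 then ln h else h powr (real N + 1 - \<beta>))"

end

theory Submission
  imports Defs
begin



lemma scale_nn:
  fixes f :: "'a::euclidean_space \<Rightarrow> ennreal"
  assumes f[measurable]: "f \<in> borel_measurable borel" and c: "c > 0"
  shows "(\<integral>\<^sup>+x. f x \<partial>lborel) = ennreal (c ^ DIM('a)) * (\<integral>\<^sup>+x. f (c *\<^sub>R x) \<partial>lborel)"
proof -
  have "(\<integral>\<^sup>+x. f x \<partial>lborel) = (\<integral>\<^sup>+x. f x \<partial>density (distr lborel borel (\<lambda>x. 0 + c *\<^sub>R x)) (\<lambda>_. \<bar>c\<bar>^DIM('a)))"
    using lborel_affine[of c "0::'a"] c by simp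
  also have "\<dots> = (\<integral>\<^sup>+x. ennreal (c ^ DIM('a)) * f (c *\<^sub>R x) \<partial>lborel)"
    using c by (subst nn_integral_density) (auto simp: nn_integral_distr)
  also have "\<dots> = ennreal (c ^ DIM('a)) * (\<integral>\<^sup>+x. f (c *\<^sub>R x) \<partial>lborel)"
    by (rule nn_integral_cmult) simp
  finally show ?thesis .
qed

lemma tonelli:
  fixes f :: "'a::euclidean_space \<Rightarrow> 'b::euclidean_space \<Rightarrow> ennreal"
  assumes f: "(\<lambda>p. f (fst p) (snd p)) \<in> borel_measurable (borel \<Otimes>\<^sub>M borel)"
  shows "(\<integral>\<^sup>+x. \<integral>\<^sup>+y. f x y \<partial>lborel \<partial>lborel) = (\<integral>\<^sup>+y. \<integral>\<^sup>+x. f x y \<partial>lborel \<partial>lborel)"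
proof -
  have m: "(\<lambda>(x,y). f x y) \<in> borel_measurable (lborel \<Otimes>\<^sub>M lborel)"
    unfolding case_prod_beta'
    by (subst measurable_cong_sets[OF sets_pair_measure_cong[OF sets_lborel sets_lborel] refl]) (rule f)
  show ?thesis using lborel_pair.Fubini'[OF m] by simp
qed




lemma inv_pow_tendsto:
  assumes "d \<ge> 1"
  shows "((\<lambda>l::real. - inverse (l ^ d)) \<longlongrightarrow> 0) at_top"
proof -
  have "((\<lambda>l::real. - (inverse l ^ d)) \<longlongrightarrow> - (0 ^ d)) at_top"
    by (intro tendsto_intros tendsto_inverse_0_at_top filterlim_ident)
  then show ?thesis using assms by (simp add: power_inverse zero_power)
qed

lemma int_pow_tail:
  assumes "d \<ge> 1"
  shows "(\<integral>\<^sup>+l. indicator {1<..} l * ennreal (real d / l ^ (d+1)) \<partial>lborel) = 1"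
proof -
  have "(\<integral>\<^sup>+l. indicator {1<..} l * ennreal (real d / l ^ (d+1)) \<partial>lborel) =
        (\<integral>\<^sup>+l. ennreal (real d / l ^ (d+1)) * indicator {1..} l \<partial>lborel)"
    by (intro nn_integral_cong_AE eventually_mono[OF AE_lborel_singleton[of 1]])
       (auto simp: indicator_def)
  also have "\<dots> = ennreal (0 - (- inverse (1 ^ d)))"
  proof (rule nn_integral_FTC_atLeast[where F = "\<lambda>l. - inverse (l ^ d)"])
    show "(\<lambda>l. real d / l ^ (d + 1)) \<in> borel_measurable borel" by measurable
    fix x :: real assume x: "1 \<le> x"
    show "0 \<le> real d / x ^ (d + 1)" using x by simp
    show "((\<lambda>l. - inverse (l ^ d)) has_real_derivative real d / x ^ (d + 1)) (at x)"
      using x assms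
      apply (auto intro!: derivative_eq_intros)
      apply (cases d; simp add: field_simps power_Suc)
      done
  next
    show "((\<lambda>l::real. - inverse (l ^ d)) \<longlongrightarrow> 0) at_top"
      using inv_pow_tendsto[OF assms] .
  qed
  finally show ?thesis by simp
qed




definition nrm :: "'a::euclidean_space \<Rightarrow> 'a" where "nrm x = x /\<^sub>R norm x"

lemma meas_nrm[measurable]: "nrm \<in> borel_measurable borel"
  unfolding nrm_def by (intro borel_measurable_scaleR borel_measurable_inverse borel_measurable_norm measurable_ident_sets) auto

lemma polar_nrm:
  fixes G :: "'a::euclidean_space \<Rightarrow> ennreal"
  assumes G[measurable]: "G \<in> borel_measurable borel" and h: "h > 0"
  shows "(\<integral>\<^sup>+\<rho>. indicator {h..} \<rho> * (ennreal (\<rho>^(DIM('a)-1) * real DIM('a)) *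
            (\<integral>\<^sup>+z. indicator (ball 0 1) z * G (\<rho> *\<^sub>R nrm z) \<partial>lborel)) \<partial>lborel)
       = (\<integral>\<^sup>+y. indicator {y. h \<le> norm y} y * G y \<partial>lborel)"
    (is "?L = ?I")
proof -
  define d where "d = DIM('a)"
  have d1: "d \<ge> 1" unfolding d_def by (simp add: DIM_positive Suc_leI)
  define H where "H = (\<lambda>y::'a. indicator {y. h \<le> norm y} y * G y)"
  have H[measurable]: "H \<in> borel_measurable borel" unfolding H_def by measurable
  have Gm[measurable]: "(\<lambda>x. G (c *\<^sub>R nrm x)) \<in> borel_measurable borel" for c
    by measurable
  define K where "K = (\<lambda>\<rho> (v::'a). if h \<le> \<rho> \<and> norm v < \<rho> then ennreal (real d / \<rho>) * G (\<rho> *\<^sub>R nrm v) else 0)"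
  define M where "M = (\<lambda>l (v::'a). if 1 < l \<and> h \<le> norm (l *\<^sub>R v) then ennreal (real d / l) * G (l *\<^sub>R v) else 0)"
  have Km: "(\<lambda>p. K (fst p) (snd p)) \<in> borel_measurable (borel \<Otimes>\<^sub>M borel)"
    unfolding K_def by measurable
  have Km1[measurable]: "(\<lambda>\<rho>. K \<rho> v) \<in> borel_measurable borel" for v
    unfolding K_def by measurable
  have Mm: "(\<lambda>p. M (fst p) (snd p)) \<in> borel_measurable (borel \<Otimes>\<^sub>M borel)"
    unfolding M_def by measurable
  have a: "indicator {h..} \<rho> * (ennreal (\<rho>^(d-1) * real d) *
            (\<integral>\<^sup>+z. indicator (ball 0 1) z * G (\<rho> *\<^sub>R nrm z) \<partial>lborel))
          = (\<integral>\<^sup>+v. K \<rho> v \<partial>lborel)" for \<rho>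
  proof (cases "h \<le> \<rho>")
    case False then show ?thesis by (simp add: K_def)
  next
    case True
    then have \<rho>: "\<rho> > 0" using h by simp
    have "(\<integral>\<^sup>+z. indicator (ball 0 1) z * G (\<rho> *\<^sub>R nrm z) \<partial>lborel)
        = ennreal ((1/\<rho>) ^ d) * (\<integral>\<^sup>+v. indicator (ball 0 1) ((1/\<rho>) *\<^sub>R v) * G (\<rho> *\<^sub>R nrm ((1/\<rho>) *\<^sub>R v)) \<partial>lborel)"
      unfolding d_def
      apply (rule scale_nn[where f="\<lambda>z. indicator (ball 0 1) z * G (\<rho> *\<^sub>R nrm z)" and c="1/\<rho>"])
       apply (intro borel_measurable_times_ennreal borel_measurable_indicator Gm)
      using \<rho> by auto
    also have "(\<lambda>v. indicator (ball 0 1) ((1/\<rho>) *\<^sub>R v) * G (\<rho> *\<^sub>R nrm ((1/\<rho>) *\<^sub>R v)))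
       = (\<lambda>v. indicator {v. norm v < \<rho>} v * G (\<rho> *\<^sub>R nrm v))"
      using \<rho> by (auto simp: indicator_def field_simps nrm_def)
    finally have "ennreal (\<rho>^(d-1) * real d) *
            (\<integral>\<^sup>+z. indicator (ball 0 1) z * G (\<rho> *\<^sub>R nrm z) \<partial>lborel)
         = ennreal (\<rho>^(d-1) * real d) * ennreal ((1/\<rho>) ^ d) * (\<integral>\<^sup>+v. indicator {v. norm v < \<rho>} v * G (\<rho> *\<^sub>R nrm v) \<partial>lborel)"
      by (simp add: mult.assoc)
    also have "ennreal (\<rho>^(d-1) * real d) * ennreal ((1/\<rho>) ^ d) = ennreal (real d / \<rho>)"
    proof -
      have "\<rho>^(d-1) * real d * (1/\<rho>) ^ d = real d / \<rho>"
        using \<rho> d1 by (cases d) (auto simp: field_simps power_Suc)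
      then show ?thesis using \<rho> by (simp add: ennreal_mult[symmetric])
    qed
    also have "ennreal (real d / \<rho>) * (\<integral>\<^sup>+v. indicator {v. norm v < \<rho>} v * G (\<rho> *\<^sub>R nrm v) \<partial>lborel)
        = (\<integral>\<^sup>+v. K \<rho> v \<partial>lborel)"
      using True by (subst nn_integral_cmult[symmetric]) (measurable, auto simp: K_def indicator_def intro!: nn_integral_cong)
    finally show ?thesis using True by simp
  qed
  have key: "(\<integral>\<^sup>+\<rho>. K \<rho> v \<partial>lborel) = (\<integral>\<^sup>+l. M l v \<partial>lborel)" if v: "v \<noteq> 0" for v :: 'a
  proof -
    have nv: "norm v > 0" using v by simp
    have "(\<integral>\<^sup>+\<rho>. K \<rho> v \<partial>lborel) = ennreal \<bar>norm v\<bar> * (\<integral>\<^sup>+l. K (0 + norm v * l) v \<partial>lborel)"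
      using nv by (intro nn_integral_real_affine) auto
    also have "\<dots> = (\<integral>\<^sup>+l. M l v \<partial>lborel)"
    proof (subst nn_integral_cmult[symmetric])
      show "(\<lambda>l. K (0 + norm v * l) v) \<in> borel_measurable lborel" by measurable
      show "(\<integral>\<^sup>+ l. ennreal \<bar>norm v\<bar> * K (0 + norm v * l) v \<partial>lborel) = integral\<^sup>N lborel (\<lambda>l. M l v)"
      proof (intro nn_integral_cong)
        fix l :: real
        show "ennreal \<bar>norm v\<bar> * K (0 + norm v * l) v = M l v"
        proof (cases "1 < l")
          case False
          then have "\<not> norm v < norm v * l" using nv by (simp add: not_less mult_le_cancel_left1)
          then show ?thesis using False by (simp add: K_def M_def)
        next
          case True
          have e1: "norm v < norm v * l" using nv True by simp
          have e2: "norm (l *\<^sub>R v) = norm v * l" using True by (simp add: mult.commute)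
          have e3: "(norm v * l) *\<^sub>R nrm v = l *\<^sub>R v" using nv by (simp add: nrm_def)
          have e4: "ennreal (norm v) * ennreal (real d / (norm v * l)) = ennreal (real d / l)"
            using nv True by (simp add: ennreal_mult[symmetric])
          have "K (0 + norm v * l) v = (if h \<le> norm v * l then ennreal (real d / (norm v * l)) * G (l *\<^sub>R v) else 0)"
            unfolding K_def using e1 e3 by simp
          moreover have "M l v = (if h \<le> norm v * l then ennreal (real d / l) * G (l *\<^sub>R v) else 0)"
            unfolding M_def e2 using True by simp
          ultimately show ?thesis
            by (simp add: mult.assoc[symmetric] e4)
        qed
      qed
    qed
    finally show ?thesis .
  qed
  have "?L = (\<integral>\<^sup>+\<rho>. \<integral>\<^sup>+v. K \<rho> v \<partial>lborel \<partial>lborel)"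
    unfolding d_def[symmetric] using a by simp
  also have "\<dots> = (\<integral>\<^sup>+v. \<integral>\<^sup>+\<rho>. K \<rho> v \<partial>lborel \<partial>lborel)"
    by (rule tonelli[OF Km])
  also have "\<dots> = (\<integral>\<^sup>+v. \<integral>\<^sup>+l. M l v \<partial>lborel \<partial>lborel)"
    by (intro nn_integral_cong_AE eventually_mono[OF AE_lborel_singleton[of 0]] key)
  also have "\<dots> = (\<integral>\<^sup>+l. \<integral>\<^sup>+v. M l v \<partial>lborel \<partial>lborel)"
    by (rule tonelli) (unfold M_def, measurable)
  also have "\<dots> = (\<integral>\<^sup>+l. indicator {1<..} l * ennreal (real d / l ^ (d+1)) * ?I \<partial>lborel)"
  proof (intro nn_integral_cong)
    fix l :: real
    show "(\<integral>\<^sup>+v. M l v \<partial>lborel) = indicator {1<..} l * ennreal (real d / l ^ (d+1)) * ?I"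
    proof (cases "1 < l")
      case False then show ?thesis by (simp add: M_def)
    next
      case True
      have "?I = ennreal (l ^ d) * (\<integral>\<^sup>+v. H (l *\<^sub>R v) \<partial>lborel)"
        unfolding d_def H_def[symmetric] using True by (intro scale_nn) auto
      moreover have "(\<integral>\<^sup>+v. M l v \<partial>lborel) = ennreal (real d / l) * (\<integral>\<^sup>+v. H (l *\<^sub>R v) \<partial>lborel)"
        by (subst nn_integral_cmult[symmetric]) (measurable, auto simp: M_def H_def indicator_def True intro!: nn_integral_cong)
      moreover have "ennreal (real d / l) = ennreal (real d / l ^ (d+1)) * ennreal (l ^ d)"
        using True by (simp add: ennreal_mult[symmetric] field_simps)
      ultimately show ?thesis using True by (simp add: mult.assoc)
    qed
  qed
  also have "\<dots> = (\<integral>\<^sup>+l. indicator {1<..} l * ennreal (real d / l ^ (d+1)) \<partial>lborel) * ?I"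
    by (rule nn_integral_multc) measurable
  also have "\<dots> = ?I" using int_pow_tail[OF d1] by simp
  finally show ?thesis .
qed

lemma radial:
  fixes \<phi> :: "real \<Rightarrow> ennreal"
  assumes [measurable]: "\<phi> \<in> borel_measurable borel" and a: "a > 0"
  shows "(\<integral>\<^sup>+y. indicator {y. a \<le> norm y} (y::'a::euclidean_space) * \<phi> (norm y) \<partial>lborel)
      = (\<integral>\<^sup>+\<rho>. indicator {a..} \<rho> * (ennreal (\<rho>^(DIM('a)-1) * real DIM('a) * unit_ball_vol DIM('a)) * \<phi> \<rho>) \<partial>lborel)"
proof -
  have "(\<integral>\<^sup>+y. indicator {y. a \<le> norm y} (y::'a) * \<phi> (norm y) \<partial>lborel)
     = (\<integral>\<^sup>+\<rho>. indicator {a..} \<rho> * (ennreal (\<rho>^(DIM('a)-1) * real DIM('a)) *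
            (\<integral>\<^sup>+z. indicator (ball 0 1) (z::'a) * \<phi> (norm (\<rho> *\<^sub>R nrm z)) \<partial>lborel)) \<partial>lborel)"
    by (rule polar_nrm[where G="\<lambda>y. \<phi> (norm y)", symmetric]) (measurable, rule a)
  also have "\<dots> = (\<integral>\<^sup>+\<rho>. indicator {a..} \<rho> * (ennreal (\<rho>^(DIM('a)-1) * real DIM('a) * unit_ball_vol DIM('a)) * \<phi> \<rho>) \<partial>lborel)"
  proof (intro nn_integral_cong)
    fix \<rho> :: real
    show "indicator {a..} \<rho> * (ennreal (\<rho>^(DIM('a)-1) * real DIM('a)) *
            (\<integral>\<^sup>+z. indicator (ball 0 1) (z::'a) * \<phi> (norm (\<rho> *\<^sub>R nrm z)) \<partial>lborel))
        = indicator {a..} \<rho> * (ennreal (\<rho>^(DIM('a)-1) * real DIM('a) * unit_ball_vol DIM('a)) * \<phi> \<rho>)"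
    proof (cases "a \<le> \<rho>")
      case False then show ?thesis by simp
    next
      case True
      then have \<rho>: "\<rho> > 0" using a by simp
      have "(\<integral>\<^sup>+z. indicator (ball 0 1) (z::'a) * \<phi> (norm (\<rho> *\<^sub>R nrm z)) \<partial>lborel)
          = (\<integral>\<^sup>+z. \<phi> \<rho> * indicator (ball 0 1) (z::'a) \<partial>lborel)"
        using \<rho> by (intro nn_integral_cong_AE eventually_mono[OF AE_lborel_singleton[of 0]])
           (simp add: nrm_def mult.commute[of "indicator _ _"] mult.assoc)
      also have "\<dots> = \<phi> \<rho> * ennreal (unit_ball_vol DIM('a))"
        by (subst nn_integral_cmult_indicator) (auto simp: emeasure_ball)
      finally show ?thesis using True \<rho>
        by (simp add: ennreal_mult mult_ac)
    qed
  qed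
  finally show ?thesis .
qed




lemma pow_tail:
  assumes a: "a > 0" and q: "q < -1"
  shows "(\<integral>\<^sup>+x. indicator {a..} x * ennreal (x powr q) \<partial>lborel) = ennreal (a powr (q+1) / (-(q+1)))"
proof -
  have "(\<integral>\<^sup>+x. indicator {a..} x * ennreal (x powr q) \<partial>lborel) = (\<integral>\<^sup>+x. ennreal (x powr q) * indicator {a..} x \<partial>lborel)"
    by (simp add: mult.commute)
  also have "\<dots> = ennreal (0 - a powr (q+1) / (q+1))"
  proof (rule nn_integral_FTC_atLeast[where F="\<lambda>x. x powr (q+1) / (q+1)"])
    show "(\<lambda>x. x powr q) \<in> borel_measurable borel" by measurable
    fix x assume x: "a \<le> x"
    then have x0: "x > 0" using a by simp
    show "0 \<le> x powr q" by simp
    show "((\<lambda>x. x powr (q+1) / (q+1)) has_real_derivative x powr q) (at x)"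
    proof -
      have "((\<lambda>x. x powr (q+1) / (q+1)) has_real_derivative (q+1) * x powr (q+1-1) / (q+1)) (at x)"
        by (intro DERIV_cdivide has_real_derivative_powr x0)
      moreover have "(q+1) * x powr (q+1-1) / (q+1) = x powr q" using q by simp
      ultimately show ?thesis by simp
    qed
  next
    have "((\<lambda>x::real. x powr (q+1)) \<longlongrightarrow> 0) at_top"
      using q by (intro tendsto_neg_powr filterlim_ident) auto
    then show "((\<lambda>x::real. x powr (q+1) / (q+1)) \<longlongrightarrow> 0) at_top"
      by (metis (no_types) div_0 tendsto_divide_zero)
  qed
  also have "0 - a powr (q+1) / (q+1) = a powr (q+1) / (-(q+1))"
    by (simp add: minus_divide_right)
  finally show ?thesis .
qed

lemma pow_Icc:
  assumes a: "a > 0" "a \<le> b"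
    and F: "\<And>x. x > 0 \<Longrightarrow> (F has_real_derivative x powr q) (at x)"
  shows "(\<integral>\<^sup>+x. indicator {a..b} x * ennreal (x powr q) \<partial>lborel) = ennreal (F b - F a)"
proof -
  have "(\<integral>\<^sup>+x. indicator {a..b} x * ennreal (x powr q) \<partial>lborel) = (\<integral>\<^sup>+x. ennreal (x powr q) * indicator {a..b} x \<partial>lborel)"
    by (simp add: mult.commute)
  also have "\<dots> = ennreal (F b - F a)"
  proof (rule nn_integral_has_integral_lebesgue')
    show "((\<lambda>x. x powr q) has_integral F b - F a) {a..b}"
    proof (rule fundamental_theorem_of_calculus[OF a(2)])
      fix x assume "x \<in> {a..b}"
      then have "x > 0" using a by simp
      then show "(F has_vector_derivative x powr q) (at x within {a..b})"
        using F by (auto simp: has_real_derivative_iff_has_vector_derivative[symmetric] intro: DERIV_subset)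
    qed
  qed simp
  finally show ?thesis .
qed

lemma Q_split:
  assumes R: "R > 0" "R \<le> h" and p: "p < -1"
  shows "(\<integral>\<^sup>+\<rho>. indicator {R..} \<rho> * ennreal (\<rho> powr p * min h \<rho>) \<partial>lborel)
       = (\<integral>\<^sup>+\<rho>. indicator {R..h} \<rho> * ennreal (\<rho> powr (p+1)) \<partial>lborel)
         + ennreal (h powr (p+2) / (-(p+1)))"
proof -
  have h0: "h > 0" using R by simp
  have "(\<integral>\<^sup>+\<rho>. indicator {R..} \<rho> * ennreal (\<rho> powr p * min h \<rho>) \<partial>lborel)
      = (\<integral>\<^sup>+\<rho>. indicator {R..h} \<rho> * ennreal (\<rho> powr (p+1)) + ennreal h * (indicator {h..} \<rho> * ennreal (\<rho> powr p)) \<partial>lborel)"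
  proof (intro nn_integral_cong_AE eventually_mono[OF AE_lborel_singleton[of h]])
    fix \<rho> :: real assume "\<rho> \<noteq> h"
    then show "indicator {R..} \<rho> * ennreal (\<rho> powr p * min h \<rho>)
      = indicator {R..h} \<rho> * ennreal (\<rho> powr (p+1)) + ennreal h * (indicator {h..} \<rho> * ennreal (\<rho> powr p))"
      using R h0 by (cases "\<rho> < h") (auto simp: indicator_def powr_add ennreal_mult'[symmetric] mult.commute min_def)
  qed
  also have "\<dots> = (\<integral>\<^sup>+\<rho>. indicator {R..h} \<rho> * ennreal (\<rho> powr (p+1)) \<partial>lborel)
       + ennreal h * (\<integral>\<^sup>+\<rho>. indicator {h..} \<rho> * ennreal (\<rho> powr p) \<partial>lborel)"
    by (subst nn_integral_add) (auto simp: nn_integral_cmult)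
  also have "(\<integral>\<^sup>+\<rho>. indicator {h..} \<rho> * ennreal (\<rho> powr p) \<partial>lborel) = ennreal (h powr (p+1) / (-(p+1)))"
    using h0 p by (intro pow_tail) auto
  also have "ennreal h * ennreal (h powr (p+1) / (-(p+1))) = ennreal (h powr (p+2) / (-(p+1)))"
    using h0 p by (simp add: ennreal_mult'[symmetric] powr_add[symmetric] add.commute[of 1] powr_add power2_eq_square)
  finally show ?thesis .
qed

lemma Q_bounds:
  assumes R: "R > 0" and p: "-2 \<le> p" "p < -1"
  shows "\<exists>K1 K2 H. K1 > 0 \<and> K2 > 0 \<and> H \<ge> R \<and> (\<forall>h\<ge>H.
     1 \<le> (if p = -2 then ln h else h powr (p+2)) \<and>
     ennreal (K1 * (if p = -2 then ln h else h powr (p+2))) \<le> (\<integral>\<^sup>+\<rho>. indicator {R..} \<rho> * ennreal (\<rho> powr p * min h \<rho>) \<partial>lborel) \<and>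
     (\<integral>\<^sup>+\<rho>. indicator {R..} \<rho> * ennreal (\<rho> powr p * min h \<rho>) \<partial>lborel) \<le> ennreal (K2 * (if p = -2 then ln h else h powr (p+2))))"
proof (cases "p = -2")
  case True
  define H where "H = max R (max (R^2) (max (1/R) (exp 1)))"
  show ?thesis
  proof (intro exI conjI allI impI)
    show "(1/2::real) > 0" "(3::real) > 0" "H \<ge> R" by (auto simp: H_def)
    fix h assume hH: "H \<le> h"
    then have hR: "R \<le> h" and hR2: "R^2 \<le> h" and hR1: "1/R \<le> h" and he: "exp 1 \<le> h"
      by (auto simp: H_def)
    have h0: "h > 0" using hR R by simp
    have lnh1: "1 \<le> ln h" using he h0 by (subst ln_ge_iff) auto
    have lnR2: "2 * ln R \<le> ln h" using hR2 R by (metis ln_le_cancel_iff ln_realpow zero_less_power of_nat_numeral h0)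
    have lnR1: "- ln R \<le> ln h" using hR1 R by (metis ln_inverse ln_le_cancel_iff inverse_eq_divide h0 positive_imp_inverse_positive)
    have I1: "(\<integral>\<^sup>+\<rho>. indicator {R..h} \<rho> * ennreal (\<rho> powr (p+1)) \<partial>lborel) = ennreal (ln h - ln R)"
    proof (rule pow_Icc[OF R hR])
      fix x :: real assume "x > 0"
      then show "(ln has_real_derivative x powr (p+1)) (at x)"
        using True by (auto intro!: derivative_eq_intros simp: powr_minus_divide)
    qed
    have Q: "(\<integral>\<^sup>+\<rho>. indicator {R..} \<rho> * ennreal (\<rho> powr p * min h \<rho>) \<partial>lborel) = ennreal (ln h - ln R) + ennreal 1"
      using Q_split[OF R hR p(2)] I1 True h0 by simp
    have "ln h - ln R \<ge> 0" using hR R by simp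
    then have Q': "(\<integral>\<^sup>+\<rho>. indicator {R..} \<rho> * ennreal (\<rho> powr p * min h \<rho>) \<partial>lborel) = ennreal (ln h - ln R + 1)"
      unfolding Q by (subst ennreal_plus) auto
    show "1 \<le> (if p = -2 then ln h else h powr (p+2))" using True lnh1 by simp
    show "ennreal (1/2 * (if p = -2 then ln h else h powr (p+2))) \<le> (\<integral>\<^sup>+\<rho>. indicator {R..} \<rho> * ennreal (\<rho> powr p * min h \<rho>) \<partial>lborel)"
      unfolding Q' using True lnR2 by (intro ennreal_leI) simp
    show "(\<integral>\<^sup>+\<rho>. indicator {R..} \<rho> * ennreal (\<rho> powr p * min h \<rho>) \<partial>lborel) \<le> ennreal (3 * (if p = -2 then ln h else h powr (p+2)))"
      unfolding Q' using True lnR1 lnh1 by (intro ennreal_leI) simp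
  qed
next
  case False
  then have p2: "p > -2" using p by simp
  define H where "H = max R 1"
  show ?thesis
  proof (intro exI conjI allI impI)
    have "1/(p+2) > 0" "1/(-(p+1)) > 0" using p p2 by auto
    then show "1/(-(p+1)) > 0" "1/(p+2) + 1/(-(p+1)) > 0" by linarith+
    show "H \<ge> R" by (auto simp: H_def)
    fix h assume hH: "H \<le> h"
    then have hR: "R \<le> h" and h1: "1 \<le> h" by (auto simp: H_def)
    have h0: "h > 0" using hR R by simp
    have I1: "(\<integral>\<^sup>+\<rho>. indicator {R..h} \<rho> * ennreal (\<rho> powr (p+1)) \<partial>lborel) = ennreal (h powr (p+2) / (p+2) - R powr (p+2) / (p+2))"
    proof (rule pow_Icc[OF R hR])
      fix x :: real assume x: "x > 0"
      have "((\<lambda>x. x powr (p+2) / (p+2)) has_real_derivative (p+2) * x powr (p+2-1) / (p+2)) (at x)"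
        by (intro DERIV_cdivide has_real_derivative_powr x)
      moreover have "(p+2) * x powr (p+2-1) / (p+2) = x powr (p+1)" using p2 by (simp add: add.commute)
      ultimately show "((\<lambda>x. x powr (p+2) / (p+2)) has_real_derivative x powr (p+1)) (at x)" by simp
    qed
    have A0: "0 \<le> h powr (p+2) / (p+2) - R powr (p+2) / (p+2)"
      using p2 R hR by (auto intro!: divide_right_mono powr_mono2)
    have Q: "(\<integral>\<^sup>+\<rho>. indicator {R..} \<rho> * ennreal (\<rho> powr p * min h \<rho>) \<partial>lborel)
       = ennreal (h powr (p+2) / (p+2) - R powr (p+2) / (p+2) + h powr (p+2) / (-(p+1)))"
      using Q_split[OF R hR p(2)] I1 A0 p by (simp add: ennreal_plus[symmetric] del: ennreal_plus)
    show "1 \<le> (if p = -2 then ln h else h powr (p+2))" using False h1 p2 by (simp add: ge_one_powr_ge_zero)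
    show "ennreal (1/(-(p+1)) * (if p = -2 then ln h else h powr (p+2))) \<le> (\<integral>\<^sup>+\<rho>. indicator {R..} \<rho> * ennreal (\<rho> powr p * min h \<rho>) \<partial>lborel)"
      unfolding Q using False A0 by (intro ennreal_leI) simp
    show "(\<integral>\<^sup>+\<rho>. indicator {R..} \<rho> * ennreal (\<rho> powr p * min h \<rho>) \<partial>lborel) \<le> ennreal ((1/(p+2) + 1/(-(p+1))) * (if p = -2 then ln h else h powr (p+2)))"
    proof -
      have "0 \<le> R powr (p+2)/(p+2)" using p2 by simp
      moreover have "(1/(p+2) + 1/(-(p+1))) * h powr (p+2) = h powr (p+2)/(p+2) + h powr (p+2)/(-(p+1))"
        by (simp add: distrib_right)
      ultimately show ?thesis unfolding Q using False by (intro ennreal_leI) simp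
    qed
  qed
qed




lemma JJ_cont:
  assumes "continuous_on {0..} J"
  shows "continuous_on UNIV (\<lambda>x::'a::real_normed_vector. J (norm x))"
  by (rule continuous_on_compose2[OF assms continuous_on_norm_id]) auto

lemma JJ_meas[measurable]:
  assumes "continuous_on {0..} J"
  shows "(\<lambda>x::'a::euclidean_space. J (norm x)) \<in> borel_measurable borel"
  by (rule borel_measurable_continuous_onI[OF JJ_cont[OF assms]])

lemma fst_borel[measurable]: "fst \<in> (borel::('a::second_countable_topology \<times> 'b::second_countable_topology) measure) \<rightarrow>\<^sub>M borel"
  by (subst borel_prod[symmetric]) simp

lemma snd_borel[measurable]: "snd \<in> (borel::('a::second_countable_topology \<times> 'b::second_countable_topology) measure) \<rightarrow>\<^sub>M borel"
  by (subst borel_prod[symmetric]) simp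

lemma meas_pair_lborel:
  fixes f :: "'a::euclidean_space \<times> 'b::euclidean_space \<Rightarrow> ennreal"
  assumes "f \<in> borel_measurable borel"
  shows "f \<in> borel_measurable (lborel \<Otimes>\<^sub>M lborel)"
  by (subst measurable_cong_sets[OF sets_pair_measure_cong[OF sets_lborel sets_lborel] refl])
     (simp add: borel_prod assms)

lemma Jstar_meas[measurable]:
  assumes "continuous_on {0..} J"
  shows "Jstar TYPE('m::finite) J \<in> borel_measurable borel"
proof -
  have "(\<lambda>p::real \<times> (real^'m). ennreal (J (norm p))) \<in> borel_measurable (lborel \<Otimes>\<^sub>M lborel)"
    by (rule meas_pair_lborel) (measurable, rule assms)
  note m = this
  have "(\<lambda>l::real. \<integral>\<^sup>+x'. ennreal (J (norm (l, x' :: real^'m))) \<partial>lborel) \<in> borel_measurable lborel"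
    using lborel.borel_measurable_nn_integral_fst[OF m] by simp
  then show ?thesis unfolding Jstar_def[abs_def] by (simp add: measurable_lborel1)
qed

lemma dimN_eq: "dimN TYPE('m::finite) = DIM(real \<times> (real^'m))"
  by (simp add: dimN_def)

definition wfun :: "real \<Rightarrow> real \<Rightarrow> real" where "wfun h l = min h (max 0 (-l))"

lemma wfun_emeasure:
  assumes h: "h > 0"
  shows "(\<integral>\<^sup>+r. indicator {0..h} r * indicator {h..} (r - l) \<partial>lborel) = ennreal (wfun h l)"
proof -
  have "(\<lambda>r. indicator {0..h} r * indicator {h..} (r - l) :: ennreal) = indicator {max 0 (l+h)..h}"
    by (rule ext) (auto simp: indicator_def)
  then have "(\<integral>\<^sup>+r. indicator {0..h} r * indicator {h..} (r - l) \<partial>lborel) = emeasure lborel {max 0 (l+h)..h}"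
    by simp
  also have "\<dots> = ennreal (if max 0 (l+h) \<le> h then h - max 0 (l+h) else 0)"
    by (rule emeasure_lborel_Icc_eq)
  also have "(if max 0 (l+h) \<le> h then h - max 0 (l+h) else 0) = wfun h l"
    using h by (auto simp: wfun_def max_def min_def)
  finally show ?thesis .
qed

lemma Istar_eq1:
  assumes J_cont[measurable]: "continuous_on {0..} J" and h: "h > 0"
  shows "Istar TYPE('m::finite) J h = (\<integral>\<^sup>+l. Jstar TYPE('m) J l * ennreal (wfun h l) \<partial>lborel)"
proof -
  let ?Js = "Jstar TYPE('m) J"
  have Jm[measurable]: "?Js \<in> borel_measurable borel" by (rule Jstar_meas[OF J_cont])
  have s1: "(\<integral>\<^sup>+\<rho>. indicator {h..} \<rho> * ?Js (r - \<rho>) \<partial>lborel)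
      = (\<integral>\<^sup>+l. indicator {h..} (r - l) * ?Js l \<partial>lborel)" for r
  proof -
    have "(\<integral>\<^sup>+\<rho>. indicator {h..} \<rho> * ?Js (r - \<rho>) \<partial>lborel)
      = ennreal \<bar>-1\<bar> * (\<integral>\<^sup>+l. indicator {h..} (r + -1 * l) * ?Js (r - (r + -1 * l)) \<partial>lborel)"
      by (rule nn_integral_real_affine) auto
    then show ?thesis by simp
  qed
  have "Istar TYPE('m) J h = (\<integral>\<^sup>+r. \<integral>\<^sup>+l. indicator {0..h} r * (indicator {h..} (r - l) * ?Js l) \<partial>lborel \<partial>lborel)"
    unfolding Istar_def s1 by (intro nn_integral_cong) (simp add: nn_integral_cmult)
  also have "\<dots> = (\<integral>\<^sup>+l. \<integral>\<^sup>+r. indicator {0..h} r * (indicator {h..} (r - l) * ?Js l) \<partial>lborel \<partial>lborel)"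
    by (rule tonelli) measurable
  also have "\<dots> = (\<integral>\<^sup>+l. ?Js l * ennreal (wfun h l) \<partial>lborel)"
  proof (intro nn_integral_cong)
    fix l :: real
    have "(\<integral>\<^sup>+r. indicator {0..h} r * (indicator {h..} (r - l) * ?Js l) \<partial>lborel)
       = (\<integral>\<^sup>+r. ?Js l * (indicator {0..h} r * indicator {h..} (r - l)) \<partial>lborel)"
      by (simp add: mult_ac)
    also have "\<dots> = ?Js l * ennreal (wfun h l)"
      by (subst nn_integral_cmult) (measurable, simp add: wfun_emeasure[OF h])
    finally show "(\<integral>\<^sup>+r. indicator {0..h} r * (indicator {h..} (r - l) * ?Js l) \<partial>lborel) = ?Js l * ennreal (wfun h l)" .
  qed
  finally show ?thesis .
qed

lemma Istar_eq2:
  assumes J_cont[measurable]: "continuous_on {0..} J" and h: "h > 0"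
  shows "Istar TYPE('m::finite) J h = (\<integral>\<^sup>+x. ennreal (J (norm (x :: real \<times> (real^'m)))) * ennreal (wfun h (fst x)) \<partial>lborel)"
proof -
  have "Istar TYPE('m::finite) J h = (\<integral>\<^sup>+l. \<integral>\<^sup>+x'. ennreal (J (norm (l, x' :: real^'m))) * ennreal (wfun h l) \<partial>lborel \<partial>lborel)"
    unfolding Istar_eq1[OF J_cont h] Jstar_def
  proof (intro nn_integral_cong)
    fix l :: real
    have "(\<lambda>x'. ennreal (J (norm (l, x' :: real^'m)))) \<in> borel_measurable lborel" by measurable
    then show "(\<integral>\<^sup>+x'. ennreal (J (norm (l, x' :: real^'m))) \<partial>lborel) * ennreal (wfun h l) = (\<integral>\<^sup>+x'. ennreal (J (norm (l, x' :: real^'m))) * ennreal (wfun h l) \<partial>lborel)"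
      by (rule nn_integral_multc[symmetric])
  qed
  also have "\<dots> = (\<integral>\<^sup>+x. ennreal (J (norm (x :: real \<times> (real^'m)))) * ennreal (wfun h (fst x)) \<partial>(lborel \<Otimes>\<^sub>M lborel))"
  proof (rule lborel.nn_integral_fst[where f="\<lambda>x. ennreal (J (norm (x :: real \<times> (real^'m)))) * ennreal (wfun h (fst x))", simplified])
    show "(\<lambda>x. ennreal (J (norm (x :: real \<times> (real^'m)))) * ennreal (wfun h (fst x))) \<in> borel_measurable (lborel \<Otimes>\<^sub>M lborel)"
      by (rule meas_pair_lborel) (unfold wfun_def, measurable)
  qed
  also have "\<dots> = (\<integral>\<^sup>+x. ennreal (J (norm (x :: real \<times> (real^'m)))) * ennreal (wfun h (fst x)) \<partial>lborel)"
    by (simp add: lborel_prod)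
  finally show ?thesis .
qed

lemma refl_nn:
  fixes f :: "'a::euclidean_space \<Rightarrow> ennreal"
  assumes f[measurable]: "f \<in> borel_measurable borel"
  shows "(\<integral>\<^sup>+y. f y \<partial>lborel) = (\<integral>\<^sup>+x. f (t - x) \<partial>lborel)"
proof -
  have "(\<integral>\<^sup>+y. f y \<partial>lborel) = (\<integral>\<^sup>+y. f y \<partial>density (distr lborel borel (\<lambda>x. t + (-1) *\<^sub>R x)) (\<lambda>_. \<bar>-1::real\<bar>^DIM('a)))"
    using lborel_affine[of "-1" t] by simp
  also have "\<dots> = (\<integral>\<^sup>+x. f (t - x) \<partial>lborel)"
    by (subst nn_integral_density) (auto simp: nn_integral_distr)
  finally show ?thesis .
qed

definition W2 :: "real \<Rightarrow> real \<times> (real^'m::finite) \<Rightarrow> ennreal" where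
  "W2 h x = emeasure lborel {r. 0 \<le> r \<and> r \<le> h \<and> h \<le> norm ((r, 0) - x)}"

lemma Itilde_eq:
  assumes J_cont[measurable]: "continuous_on {0..} J" and h: "h > 0"
  shows "Itilde TYPE('m::finite) J h = (\<integral>\<^sup>+x. ennreal (J (norm (x :: real \<times> (real^'m)))) * W2 h x \<partial>lborel)"
proof -
  let ?JJ = "\<lambda>x::real \<times> (real^'m). ennreal (J (norm x))"
  have s1: "(\<integral>\<^sup>+\<rho>. indicator {h..} \<rho> * Jtilde TYPE('m) J r \<rho> \<partial>lborel)
      = (\<integral>\<^sup>+x. indicator {x. h \<le> norm ((r, 0) - x)} x * ?JJ x \<partial>lborel)" for r
  proof -
    have "(\<integral>\<^sup>+\<rho>. indicator {h..} \<rho> * Jtilde TYPE('m) J r \<rho> \<partial>lborel)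
      = (\<integral>\<^sup>+\<rho>. indicator {h..} \<rho> * (ennreal (\<rho>^(DIM(real \<times> (real^'m))-1) * real DIM(real \<times> (real^'m))) *
            (\<integral>\<^sup>+z. indicator (ball 0 1) z * ?JJ ((r, 0) - \<rho> *\<^sub>R nrm z) \<partial>lborel)) \<partial>lborel)"
      unfolding Jtilde_def sphere_int_def dimN_eq nrm_def ..
    also have "\<dots> = (\<integral>\<^sup>+y. indicator {y. h \<le> norm y} y * ?JJ ((r, 0) - y) \<partial>lborel)"
      by (rule polar_nrm[OF _ h]) measurable
    also have "\<dots> = (\<integral>\<^sup>+x. indicator {y. h \<le> norm y} ((r, 0) - x) * ?JJ ((r, 0) - ((r, 0) - x)) \<partial>lborel)"
      by (rule refl_nn) measurable
    also have "\<dots> = (\<integral>\<^sup>+x. indicator {x. h \<le> norm ((r, 0) - x)} x * ?JJ x \<partial>lborel)"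
      by (simp add: indicator_def)
    finally show ?thesis .
  qed
  have "Itilde TYPE('m) J h = (\<integral>\<^sup>+r. \<integral>\<^sup>+x. indicator {0..h} r * (indicator {x. h \<le> norm ((r, 0) - x)} x * ?JJ x) \<partial>lborel \<partial>lborel)"
    unfolding Itilde_def s1 by (intro nn_integral_cong) (simp add: nn_integral_cmult)
  also have "\<dots> = (\<integral>\<^sup>+x. \<integral>\<^sup>+r. indicator {0..h} r * (indicator {x. h \<le> norm ((r, 0) - x)} x * ?JJ x) \<partial>lborel \<partial>lborel)"
  proof (rule tonelli)
    have "(\<lambda>p::real \<times> (real \<times> (real^'m)). (if 0 \<le> fst p \<and> fst p \<le> h then 1 else 0) * ((if h \<le> norm ((fst p, 0) - snd p) then 1 else 0) * ?JJ (snd p)))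
       \<in> borel_measurable (borel \<Otimes>\<^sub>M borel)" by measurable
    then show "(\<lambda>p::real \<times> (real \<times> (real^'m)). indicator {0..h} (fst p) * (indicator {x. h \<le> norm ((fst p, 0) - x)} (snd p) * ?JJ (snd p)))
       \<in> borel_measurable (borel \<Otimes>\<^sub>M borel)" by (simp add: indicator_def)
  qed
  also have "\<dots> = (\<integral>\<^sup>+x. ?JJ x * W2 h x \<partial>lborel)"
  proof (intro nn_integral_cong)
    fix x :: "real \<times> (real^'m)"
    have "(\<lambda>r. indicator {0..h} r * (indicator {x. h \<le> norm ((r, 0) - x)} x * ?JJ x))
        = (\<lambda>r. ?JJ x * indicator {r. 0 \<le> r \<and> r \<le> h \<and> h \<le> norm ((r, 0) - x)} r)"
      by (rule ext) (auto simp: indicator_def)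
    moreover have "{r. 0 \<le> r \<and> r \<le> h \<and> h \<le> norm ((r, 0) - x)} \<in> sets lborel"
    proof -
      have "Measurable.pred borel (\<lambda>r::real. 0 \<le> r \<and> r \<le> h \<and> h \<le> norm ((r, 0) - x))" by measurable
      then show ?thesis by (simp add: pred_def)
    qed
    ultimately show "(\<integral>\<^sup>+r. indicator {0..h} r * (indicator {x. h \<le> norm ((r, 0) - x)} x * ?JJ x) \<partial>lborel) = ?JJ x * W2 h x"
      by (simp add: nn_integral_cmult_indicator W2_def)
  qed
  finally show ?thesis .
qed

lemma W2_sets: "{r. 0 \<le> r \<and> r \<le> h \<and> h \<le> norm ((r, 0) - (x::real \<times> (real^'m::finite)))} \<in> sets lborel"
proof -
  have "Measurable.pred borel (\<lambda>r::real. 0 \<le> r \<and> r \<le> h \<and> h \<le> norm ((r, 0) - x))" by measurable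
  then show ?thesis by (simp add: pred_def)
qed

lemma W2_lower:
  assumes h: "h > 0"
  shows "ennreal (wfun h (fst x)) \<le> W2 h (x::real \<times> (real^'m::finite))"
proof -
  have "ennreal (wfun h (fst x)) = emeasure lborel {max 0 (fst x + h)..h}"
    using h by (simp add: emeasure_lborel_Icc_eq wfun_def max_def min_def)
  also have "\<dots> \<le> W2 h x"
    unfolding W2_def
  proof (rule emeasure_mono[OF _ W2_sets], safe)
    fix r assume r: "r \<in> {max 0 (fst x + h)..h}"
    then show "0 \<le> r" "r \<le> h" by auto
    have "h \<le> r - fst x" using r by auto
    also have "\<dots> \<le> norm (r - fst x)" by simp
    also have "\<dots> \<le> norm ((r, 0) - x)"
      using norm_fst_le[of "r - fst x" "0 - snd x"] by (cases x) simp
    finally show "h \<le> norm ((r, 0) - x)" .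
  qed
  finally show ?thesis .
qed

lemma W2_upper:
  assumes h: "h > 0"
  shows "W2 h (x::real \<times> (real^'m::finite)) \<le> ennreal (min h (norm x))"
proof -
  have a: "W2 h x \<le> emeasure lborel {0..h}"
    unfolding W2_def by (rule emeasure_mono) auto
  have b: "W2 h x \<le> emeasure lborel {h - norm x..h}"
    unfolding W2_def
  proof (rule emeasure_mono, safe)
    fix r assume r: "0 \<le> r" "r \<le> h" "h \<le> norm ((r, 0::real^'m) - x)"
    have "norm ((r, 0::real^'m) - x) \<le> norm (r, 0::real^'m) + norm x" by (rule norm_triangle_ineq4)
    also have "norm (r, 0::real^'m) = r" using r by (simp add: norm_Pair)
    finally show "r \<in> {h - norm x..h}" using r by auto
  qed auto
  show ?thesis
  proof (cases "h \<le> norm x")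
    case True then show ?thesis using a h by simp
  next
    case False then show ?thesis using b by (simp add: emeasure_lborel_Icc_eq)
  qed
qed

lemma wfun_upper: "wfun h (fst x) \<le> min h (norm (x::real \<times> (real^'m::finite)))"
proof -
  have "\<bar>fst x\<bar> \<le> norm x" using norm_fst_le[of "fst x" "snd x"] by simp
  then show ?thesis unfolding wfun_def by auto
qed

lemma U_bound:
  assumes J_cont[measurable]: "continuous_on {0..} J"
    and J_int: "(\<integral>\<^sup>+ x. ennreal (J (norm (x :: real \<times> (real^'m::finite)))) \<partial>lborel) = 1"
    and tail: "\<forall>\<eta>\<ge>R. J \<eta> \<le> c2 * \<eta> powr (-\<beta>)" and R: "R > 0" and c2: "c2 > 0"
    and J_nonneg: "\<forall>t\<ge>0. J t \<ge> 0" and h: "h > 0"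
  shows "(\<integral>\<^sup>+x. ennreal (J (norm (x :: real \<times> (real^'m)))) * ennreal (min h (norm x)) \<partial>lborel)
     \<le> ennreal R + ennreal (c2 * real DIM(real \<times> (real^'m)) * unit_ball_vol DIM(real \<times> (real^'m))) *
        (\<integral>\<^sup>+\<rho>. indicator {R..} \<rho> * ennreal (\<rho> powr (real DIM(real \<times> (real^'m)) - 1 - \<beta>) * min h \<rho>) \<partial>lborel)"
proof -
  define d where "d = DIM(real \<times> (real^'m))"
  define \<omega> where "\<omega> = unit_ball_vol d"
  have d1: "d \<ge> 1" by (simp add: d_def)
  have \<omega>0: "\<omega> \<ge> 0" by (simp add: \<omega>_def)
  define \<phi> where "\<phi> = (\<lambda>\<rho>::real. ennreal (c2 * \<rho> powr (-\<beta>) * min h \<rho>))"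
  have \<phi>m[measurable]: "\<phi> \<in> borel_measurable borel" unfolding \<phi>_def by measurable
  have "(\<integral>\<^sup>+x. ennreal (J (norm (x :: real \<times> (real^'m)))) * ennreal (min h (norm x)) \<partial>lborel)
     \<le> (\<integral>\<^sup>+x. ennreal R * ennreal (J (norm (x :: real \<times> (real^'m)))) + indicator {y. R \<le> norm y} x * \<phi> (norm x) \<partial>lborel)"
  proof (rule nn_integral_mono)
    fix x :: "real \<times> (real^'m)"
    show "ennreal (J (norm x)) * ennreal (min h (norm x)) \<le> ennreal R * ennreal (J (norm x)) + indicator {y. R \<le> norm y} x * \<phi> (norm x)"
    proof (cases "R \<le> norm x")
      case True
      have "J (norm x) \<le> c2 * norm x powr (-\<beta>)" using tail True by auto
      then have "J (norm x) * min h (norm x) \<le> c2 * norm x powr (-\<beta>) * min h (norm x)"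
        using h by (intro mult_right_mono) auto
      moreover have "ennreal (J (norm x)) * ennreal (min h (norm x)) = ennreal (J (norm x) * min h (norm x))"
        using J_nonneg h by (subst ennreal_mult) auto
      ultimately have "ennreal (J (norm x)) * ennreal (min h (norm x)) \<le> \<phi> (norm x)"
        unfolding \<phi>_def by (simp add: ennreal_leI)
      also have "\<phi> (norm x) = indicator {y. R \<le> norm y} x * \<phi> (norm x)" using True by simp
      also have "\<dots> \<le> ennreal R * ennreal (J (norm x)) + indicator {y. R \<le> norm y} x * \<phi> (norm x)"
        by (rule add_increasing[OF zero_le order_refl])
      finally show ?thesis .
    next
      case False
      have "ennreal (J (norm x)) * ennreal (min h (norm x)) \<le> ennreal (J (norm x)) * ennreal R"
        using False by (intro mult_left_mono ennreal_leI) auto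
      also have "\<dots> = ennreal R * ennreal (J (norm x))" by (rule mult.commute)
      also have "\<dots> \<le> ennreal R * ennreal (J (norm x)) + indicator {y. R \<le> norm y} x * \<phi> (norm x)"
        by (rule add_increasing2[OF zero_le order_refl])
      finally show ?thesis .
    qed
  qed
  also have "\<dots> = ennreal R * (\<integral>\<^sup>+x. ennreal (J (norm (x :: real \<times> (real^'m)))) \<partial>lborel)
       + (\<integral>\<^sup>+x. indicator {y. R \<le> norm y} x * \<phi> (norm (x :: real \<times> (real^'m))) \<partial>lborel)"
    by (subst nn_integral_add) (measurable, simp add: nn_integral_cmult)
  also have "(\<integral>\<^sup>+x. indicator {y. R \<le> norm y} x * \<phi> (norm (x :: real \<times> (real^'m))) \<partial>lborel)
     = (\<integral>\<^sup>+\<rho>. indicator {R..} \<rho> * (ennreal (\<rho>^(d-1) * real d * \<omega>) * \<phi> \<rho>) \<partial>lborel)"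
    unfolding d_def \<omega>_def by (rule radial[OF \<phi>m R])
  also have "\<dots> = (\<integral>\<^sup>+\<rho>. ennreal (c2 * real d * \<omega>) * (indicator {R..} \<rho> * ennreal (\<rho> powr (real d - 1 - \<beta>) * min h \<rho>)) \<partial>lborel)"
  proof (intro nn_integral_cong)
    fix \<rho> :: real
    show "indicator {R..} \<rho> * (ennreal (\<rho>^(d-1) * real d * \<omega>) * \<phi> \<rho>) = ennreal (c2 * real d * \<omega>) * (indicator {R..} \<rho> * ennreal (\<rho> powr (real d - 1 - \<beta>) * min h \<rho>))"
    proof (cases "R \<le> \<rho>")
      case False then show ?thesis by simp
    next
      case True
      then have \<rho>: "\<rho> > 0" using R by simp
      have "\<rho>^(d-1) = \<rho> powr (real d - 1)" using \<rho> d1 by (simp add: powr_realpow[symmetric] of_nat_diff)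
      then have e: "\<rho>^(d-1) * real d * \<omega> * (c2 * \<rho> powr (-\<beta>) * min h \<rho>) = c2 * real d * \<omega> * (\<rho> powr (real d - 1 - \<beta>) * min h \<rho>)"
        using \<rho> by (simp add: powr_add[symmetric] mult_ac)
      have True: "0 \<le> h" using h by simp
      show ?thesis
      proof -
        have A0: "0 \<le> \<rho>^(d-1) * real d * \<omega>" using \<rho> \<omega>0 by simp
        have B0: "0 \<le> c2 * \<rho> powr (-\<beta>) * min h \<rho>" using \<rho> c2 True by simp
        have C0: "0 \<le> c2 * real d * \<omega>" using c2 \<omega>0 by simp
        have D0: "0 \<le> \<rho> powr (real d - 1 - \<beta>) * min h \<rho>" using \<rho> True by simp
        have "ennreal (\<rho>^(d-1) * real d * \<omega>) * ennreal (c2 * \<rho> powr (-\<beta>) * min h \<rho>)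
            = ennreal (c2 * real d * \<omega>) * ennreal (\<rho> powr (real d - 1 - \<beta>) * min h \<rho>)"
          by (subst ennreal_mult[symmetric, OF A0 B0], subst ennreal_mult[symmetric, OF C0 D0], simp only: e)
        then show ?thesis using \<open>R \<le> \<rho>\<close> unfolding \<phi>_def by simp
      qed
    qed
  qed
  also have "\<dots> = ennreal (c2 * real d * \<omega>) * (\<integral>\<^sup>+\<rho>. indicator {R..} \<rho> * ennreal (\<rho> powr (real d - 1 - \<beta>) * min h \<rho>) \<partial>lborel)"
    by (rule nn_integral_cmult) measurable
  finally show ?thesis using J_int unfolding d_def \<omega>_def by simp
qed

lemma Jstar_lower:
  assumes J_cont[measurable]: "continuous_on {0..} J"
    and tail: "\<forall>\<eta>\<ge>R. c1 * \<eta> powr (-\<beta>) \<le> J \<eta>" and R: "R > 0" and c1: "c1 > 0" and \<beta>: "\<beta> > 0"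
    and l: "R \<le> \<bar>l\<bar>"
  shows "ennreal (c1 * unit_ball_vol CARD('m) * sqrt 2 powr (-\<beta>) * \<bar>l\<bar> powr (real CARD('m) - \<beta>)) \<le> Jstar TYPE('m::finite) J l"
proof -
  define a where "a = \<bar>l\<bar>"
  have a0: "a > 0" using l R by (simp add: a_def)
  define c where "c = c1 * (sqrt 2 * a) powr (-\<beta>)"
  have c0: "c \<ge> 0" using c1 by (simp add: c_def)
  have pt: "ennreal c * indicator (ball 0 a) x' \<le> ennreal (J (norm (l, x' :: real^'m)))" for x'
  proof (cases "x' \<in> ball 0 a")
    case False then show ?thesis by simp
  next
    case True
    then have nx: "norm x' < a" by simp
    define \<eta> where "\<eta> = norm (l, x')"
    have \<eta>1: "a \<le> \<eta>" unfolding \<eta>_def a_def using norm_fst_le[of l x'] by simp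
    have "\<eta> = sqrt (l^2 + (norm x')^2)" unfolding \<eta>_def by (simp add: norm_Pair)
    also have "\<dots> \<le> sqrt (2 * a^2)"
    proof (rule real_sqrt_le_mono)
      have "(norm x')^2 \<le> a^2" using nx by (intro power_mono) auto
      then show "l^2 + (norm x')^2 \<le> 2 * a^2" by (simp add: a_def)
    qed
    also have "\<dots> = sqrt 2 * a" using a0 by (simp add: real_sqrt_mult)
    finally have \<eta>2: "\<eta> \<le> sqrt 2 * a" .
    have "c \<le> c1 * \<eta> powr (-\<beta>)"
      unfolding c_def using \<eta>1 \<eta>2 a0 c1 \<beta> by (intro mult_left_mono powr_mono2') auto
    also have "\<dots> \<le> J \<eta>" using tail \<eta>1 l by (auto simp: a_def)
    finally show ?thesis using True by (simp add: \<eta>_def ennreal_leI)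
  qed
  have "ennreal c * ennreal (unit_ball_vol CARD('m) * a ^ CARD('m)) = (\<integral>\<^sup>+x'. ennreal c * indicator (ball 0 a) (x' :: real^'m) \<partial>lborel)"
    using a0 by (simp add: nn_integral_cmult_indicator emeasure_ball)
  also have "\<dots> \<le> Jstar TYPE('m) J l"
    unfolding Jstar_def by (rule nn_integral_mono) (rule pt)
  also have "ennreal c * ennreal (unit_ball_vol CARD('m) * a ^ CARD('m))
     = ennreal (c1 * unit_ball_vol CARD('m) * sqrt 2 powr (-\<beta>) * \<bar>l\<bar> powr (real CARD('m) - \<beta>))"
  proof -
    have "a ^ CARD('m) = a powr real CARD('m)" using a0 by (simp add: powr_realpow)
    then have eq: "c * (unit_ball_vol CARD('m) * a ^ CARD('m)) = c1 * unit_ball_vol CARD('m) * sqrt 2 powr (-\<beta>) * \<bar>l\<bar> powr (real CARD('m) - \<beta>)"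
      unfolding c_def using a0 by (simp add: powr_mult powr_diff powr_minus divide_inverse a_def mult_ac)
    have nn: "0 \<le> unit_ball_vol CARD('m) * a ^ CARD('m)" using a0 by simp
    show ?thesis using ennreal_mult[OF c0 nn] eq by metis
  qed
  finally show ?thesis .
qed

lemma L_bound:
  assumes J_cont[measurable]: "continuous_on {0..} J"
    and tail: "\<forall>\<eta>\<ge>R. c1 * \<eta> powr (-\<beta>) \<le> J \<eta>" and R: "R > 0" and c1: "c1 > 0" and \<beta>: "\<beta> > 0"
    and h: "h > 0"
  shows "ennreal (c1 * unit_ball_vol CARD('m) * sqrt 2 powr (-\<beta>)) *
      (\<integral>\<^sup>+s. indicator {R..} s * ennreal (s powr (real CARD('m) - \<beta>) * min h s) \<partial>lborel) \<le> Istar TYPE('m::finite) J h"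
proof -
  define c where "c = c1 * unit_ball_vol CARD('m) * sqrt 2 powr (-\<beta>)"
  have c0: "c \<ge> 0" using c1 by (simp add: c_def)
  define f where "f = (\<lambda>s. ennreal c * (indicator {R..} s * ennreal (s powr (real CARD('m) - \<beta>) * min h s)))"
  have fm[measurable]: "f \<in> borel_measurable borel" unfolding f_def by measurable
  have "ennreal c * (\<integral>\<^sup>+s. indicator {R..} s * ennreal (s powr (real CARD('m) - \<beta>) * min h s) \<partial>lborel)
      = (\<integral>\<^sup>+s. f s \<partial>lborel)"
    unfolding f_def by (rule nn_integral_cmult[symmetric]) measurable
  also have "\<dots> = (\<integral>\<^sup>+l. f (0 - l) \<partial>lborel)" by (rule refl_nn[OF fm])
  also have "\<dots> \<le> (\<integral>\<^sup>+l. Jstar TYPE('m) J l * ennreal (wfun h l) \<partial>lborel)"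
  proof (rule nn_integral_mono)
    fix l :: real
    show "f (0 - l) \<le> Jstar TYPE('m) J l * ennreal (wfun h l)"
    proof (cases "R \<le> -l")
      case False then show ?thesis by (simp add: f_def)
    next
      case True
      then have l: "R \<le> \<bar>l\<bar>" by simp
      have l0: "-l > 0" using True R by simp
      have "f (0 - l) = ennreal (c * \<bar>l\<bar> powr (real CARD('m) - \<beta>)) * ennreal (wfun h l)"
        using True l0 h c0 unfolding f_def wfun_def
        by (simp add: ennreal_mult[symmetric] mult.assoc)
      also have "\<dots> \<le> Jstar TYPE('m) J l * ennreal (wfun h l)"
        by (rule mult_right_mono[OF _ zero_le]) (unfold c_def, rule Jstar_lower[OF J_cont tail R c1 \<beta> l])
      finally show ?thesis .
    qed
  qed
  also have "\<dots> = Istar TYPE('m) J h" by (rule Istar_eq1[OF J_cont h, symmetric])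
  finally show ?thesis unfolding c_def .
qed




theorem lemma7p1:
  fixes J :: "real \<Rightarrow> real" and \<beta> c1 c2 R :: real
  defines "N \<equiv> dimN TYPE('m::finite)"
  assumes J_cont: "continuous_on {0..} J"
    and J_bdd: "\<exists>M. \<forall>t\<ge>0. \<bar>J t\<bar> \<le> M"
    and J_nonneg: "\<forall>t\<ge>0. J t \<ge> 0"
    and J_0: "J 0 > 0"
    and J_int: "(\<integral>\<^sup>+ x. ennreal (J (norm (x :: real \<times> (real^'m)))) \<partial>lborel) = 1"
    and beta: "real N < \<beta>" "\<beta> \<le> real N + 1"
    and c: "c1 > 0" "c2 > 0" "R > 0"
    and J_tail: "\<forall>\<eta>\<ge>R. c1 * \<eta> powr (-\<beta>) \<le> J \<eta> \<and> J \<eta> \<le> c2 * \<eta> powr (-\<beta>)"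
  shows "\<exists>C1 C2 H. C1 > 0 \<and> C2 > 0 \<and> H > 0 \<and> (\<forall>h\<ge>H.
      ennreal (C1 * gfun N \<beta> h) \<le> Istar TYPE('m) J h \<and> Istar TYPE('m) J h \<le> ennreal (C2 * gfun N \<beta> h) \<and>
      ennreal (C1 * gfun N \<beta> h) \<le> Itilde TYPE('m) J h \<and> Itilde TYPE('m) J h \<le> ennreal (C2 * gfun N \<beta> h))"
proof -
  have N: "N = CARD('m) + 1" unfolding N_def dimN_def ..
  define p where "p = real CARD('m) - \<beta>"
  have p: "-2 \<le> p" "p < -1" using beta by (auto simp: p_def N)
  have \<beta>0: "\<beta> > 0" using beta by (simp add: N)
  have tailL: "\<forall>\<eta>\<ge>R. c1 * \<eta> powr (-\<beta>) \<le> J \<eta>" and tailU: "\<forall>\<eta>\<ge>R. J \<eta> \<le> c2 * \<eta> powr (-\<beta>)"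
    using J_tail by auto
  have pD: "real DIM(real \<times> (real^'m)) - 1 - \<beta> = p" by (simp add: p_def)
  have g_eq: "gfun N \<beta> h = (if p = -2 then ln h else h powr (p+2))" for h
    unfolding gfun_def p_def N by (auto simp: algebra_simps)
  define Q where "Q = (\<lambda>h. \<integral>\<^sup>+\<rho>. indicator {R..} \<rho> * ennreal (\<rho> powr p * min h \<rho>) \<partial>lborel)"
  obtain K1 K2 H where K: "K1 > 0" "K2 > 0" "H \<ge> R" and
    KH: "\<And>h. h \<ge> H \<Longrightarrow> 1 \<le> gfun N \<beta> h \<and> ennreal (K1 * gfun N \<beta> h) \<le> Q h \<and> Q h \<le> ennreal (K2 * gfun N \<beta> h)"
    using Q_bounds[OF c(3) p] unfolding g_eq Q_def by blast
  define cL where "cL = c1 * unit_ball_vol CARD('m) * sqrt 2 powr (-\<beta>)"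
  define cU where "cU = c2 * real DIM(real \<times> (real^'m)) * unit_ball_vol DIM(real \<times> (real^'m))"
  have cL0: "cL > 0" using c by (simp add: cL_def)
  have cU0: "cU > 0" using c by (simp add: cU_def)
  show ?thesis
  proof (intro exI conjI allI impI)
    show "cL * K1 > 0" using cL0 K by simp
    show "R + cU * K2 > 0" using cU0 K c by (simp add: add_pos_pos)
    show "H > 0" using K c by simp
    fix h assume hH: "H \<le> h"
    have h0: "h > 0" using hH K c by simp
    from KH[OF hH] have g1: "1 \<le> gfun N \<beta> h" and QL: "ennreal (K1 * gfun N \<beta> h) \<le> Q h"
      and QU: "Q h \<le> ennreal (K2 * gfun N \<beta> h)" by auto
    let ?JJ = "\<lambda>x::real \<times> (real^'m). ennreal (J (norm x))"
    have "ennreal (cL * K1 * gfun N \<beta> h) = ennreal cL * ennreal (K1 * gfun N \<beta> h)"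
      using cL0 K g1 by (simp add: ennreal_mult[symmetric] mult.assoc)
    also have "\<dots> \<le> ennreal cL * Q h" using QL by (rule mult_left_mono) simp
    also have "\<dots> \<le> Istar TYPE('m) J h"
      using L_bound[OF J_cont tailL c(3) c(1) \<beta>0 h0, where 'm='m] unfolding cL_def Q_def p_def .
    finally have IL: "ennreal (cL * K1 * gfun N \<beta> h) \<le> Istar TYPE('m) J h" .
    have IsIt: "Istar TYPE('m) J h \<le> Itilde TYPE('m) J h"
      unfolding Istar_eq2[OF J_cont h0] Itilde_eq[OF J_cont h0]
      by (intro nn_integral_mono mult_left_mono W2_lower h0) simp
    have "(\<integral>\<^sup>+x. ?JJ x * ennreal (min h (norm x)) \<partial>lborel) \<le> ennreal R + ennreal cU * Q h"
      using U_bound[OF J_cont J_int tailU c(3) c(2) J_nonneg h0] unfolding cU_def Q_def pD .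
    also have "\<dots> \<le> ennreal R + ennreal cU * ennreal (K2 * gfun N \<beta> h)"
      using QU by (intro add_left_mono mult_left_mono) simp_all
    also have "\<dots> = ennreal (R + cU * (K2 * gfun N \<beta> h))"
      using cU0 K g1 c by (simp add: ennreal_mult[symmetric] ennreal_plus[symmetric] del: ennreal_plus)
    also have "\<dots> \<le> ennreal ((R + cU * K2) * gfun N \<beta> h)"
    proof (rule ennreal_leI)
      have "R \<le> R * gfun N \<beta> h" using g1 c by simp
      then show "R + cU * (K2 * gfun N \<beta> h) \<le> (R + cU * K2) * gfun N \<beta> h"
        by (simp add: algebra_simps)
    qed
    finally have UB: "(\<integral>\<^sup>+x. ?JJ x * ennreal (min h (norm x)) \<partial>lborel) \<le> ennreal ((R + cU * K2) * gfun N \<beta> h)" .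
    have IsU: "Istar TYPE('m) J h \<le> (\<integral>\<^sup>+x. ?JJ x * ennreal (min h (norm x)) \<partial>lborel)"
      unfolding Istar_eq2[OF J_cont h0]
      by (intro nn_integral_mono mult_left_mono ennreal_leI wfun_upper) simp
    have ItU: "Itilde TYPE('m) J h \<le> (\<integral>\<^sup>+x. ?JJ x * ennreal (min h (norm x)) \<partial>lborel)"
      unfolding Itilde_eq[OF J_cont h0]
      by (intro nn_integral_mono mult_left_mono W2_upper h0) simp
    show "ennreal (cL * K1 * gfun N \<beta> h) \<le> Istar TYPE('m) J h" by (rule IL)
    show "ennreal (cL * K1 * gfun N \<beta> h) \<le> Itilde TYPE('m) J h" using IL IsIt by (rule order_trans)
    show "Istar TYPE('m) J h \<le> ennreal ((R + cU * K2) * gfun N \<beta> h)" using IsU UB by (rule order_trans)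
    show "Itilde TYPE('m) J h \<le> ennreal ((R + cU * K2) * gfun N \<beta> h)" using ItU UB by (rule order_trans)
  qed
qed


end
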